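(* Let $K$ be a field of characteristic zero, $f(x,y)=\sum_{m,n\ge0}f_{m,n}\frac{x^my^n}{m!\,n!}\in K[[x,y]]$ with $f_{0,0}=0$, $f_{0,1}\ne0$, and $\varphi_n(x)=\sum_{m\ge0}f_{m,n}\frac{x^m}{m!}$. Then the unique $y(x)\in xK[[x]]$ with $f(x,y(x))=0$ satisfies $$y(x)=\sum_{k\ge1}(-1)^k A_{k,1}(\varphi_1(x),\dots,\varphi_k(x))\frac{\varphi_0(x)^k}{k!} =\sum_{k\ge1}\sum_{n\ge k}(-1)^k A_{k,1}(\varphi_1(x),\dots,\varphi_k(x))\,B_{n,k}(f_{1,0},\dots,f_{n-k+1,0})\frac{x^n}{n!},$$ the sums converging in the $x$-adic topology of $K[[x]]$.
   Context: $B_{n,k}$ denotes the partial (exponential) Bell polynomial, defined by $\frac{1}{k!}\big(\sum_{i\ge1}X_i\frac{t^i}{i!}\big)^k=\sum_{n\ge k}B_{n,k}(X_1,\dots,X_{n-k+1})\frac{t^n}{n!}$. $A_{n,1}(X_1,\dots,X_n)$ (a polynomial in $X_1^{-1},X_1,\dots,X_n$) is the $n$-th Taylor coefficient (coefficient of $y^n/n!$) of the compositional inverse of $\sum_{n\ge1}X_n\frac{y^n}{n!}$; explicitly $A_{n,1}=X_1^{-(2n-1)}\sum \frac{(-1)^{n-1-r_1}(2n-2-r_1)!}{r_2!\cdots r_n!\,(2!)^{r_2}\cdots(n!)^{r_n}}X_1^{r_1}X_2^{r_2}\cdots X_n^{r_n}$, summed over nonnegative integer sequences $(r_1,\dots,r_n)$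 with $\sum r_i=n-1$, $\sum i r_i=2n-2$. Since $\varphi_1(0)=f_{0,1}\neq0$, $A_{k,1}(\varphi_1,\dots,\varphi_k)\in K[[x]]$ is well defined. *)

theory Defs
  imports "HOL-Computational_Algebra.Formal_Power_Series"
begin

definition bellB :: "nat \<Rightarrow> nat \<Rightarrow> (nat \<Rightarrow> 'a::field_char_0) \<Rightarrow> 'a" where
  "bellB n k x = fact n * fps_nth
     (fps_const (1 / fact k) * (Abs_fps (\<lambda>i. if i = 0 then 0 else x i / fact i)) ^ k) n"

definition A_idx :: "nat \<Rightarrow> (nat \<Rightarrow> nat) set" where
  "A_idx n = {r. (\<forall>i. i \<notin> {1..n} \<longrightarrow> r i = 0) \<and>
                 (\<Sum>i=1..n. r i) = n - 1 \<and> (\<Sum>i=1..n. i * r i) = 2 * n - 2}"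

text \<open>A_{n,1}(X_1,...,X_n) (n-th Taylor coefficient of the compositional inverse of
  sum X_n y^n/n!), via the explicit formula, evaluated at power series X 1, ..., X n
  over K (X 1 is inverted in K[[x]], which requires X 1 to have nonzero constant term).\<close>
definition A1 :: "nat \<Rightarrow> (nat \<Rightarrow> 'a::field_char_0 fps) \<Rightarrow> 'a fps" where
  "A1 n X = inverse (X 1) ^ (2 * n - 1) *
     (\<Sum>r\<in>A_idx n.
        fps_const ((-1) ^ (n - 1 - r 1) * fact (2 * n - 2 - r 1) /
                   (\<Prod>i=2..n. fact (r i) * fact i ^ r i)) *
        (\<Prod>i=1..n. X i ^ r i))"

definition phi :: "(nat \<Rightarrow> nat \<Rightarrow> 'a::field_char_0) \<Rightarrow> nat \<Rightarrow> 'a fps" where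
  "phi f n = Abs_fps (\<lambda>m. f m n / fact m)"

text \<open>f(x, y(x)) = sum_n phi_n(x) y(x)^n/n! for y with zero constant term
  (x-adically convergent; coefficient N only involves n <= N).\<close>
definition subst2 :: "(nat \<Rightarrow> nat \<Rightarrow> 'a::field_char_0) \<Rightarrow> 'a fps \<Rightarrow> 'a fps" where
  "subst2 f y = Abs_fps (\<lambda>N. \<Sum>n\<le>N. fps_nth (phi f n * fps_const (1 / fact n) * y ^ n) N)"

end

theory Submission
  imports Defs "HOL-Computational_Algebra.Formal_Laurent_Series"
begin

lemma prod_nth_cong:
  fixes W A B :: "'a::comm_semiring_1 fps"
  assumes "\<And>i. i \<le> m \<Longrightarrow> A $ i = B $ i"
  shows "(W * A) $ m = (W * B) $ m"
  using assms by (auto simp: fps_mult_nth intro!: sum.cong)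

lemma compose_trunc:
  fixes D G :: "'a::comm_ring_1 fps"
  assumes "G $ 0 = 0" "i \<le> m"
  shows "(D oo G) $ i = (\<Sum>k\<le>m. fps_const (D $ k) * G ^ k) $ i"
proof -
  have "(D oo G) $ i = (\<Sum>k=0..i. D $ k * (G^k) $ i)" by (simp add: fps_compose_nth)
  also have "... = (\<Sum>k\<le>m. D $ k * (G^k) $ i)"
    apply (rule sum.mono_neutral_left) using startsby_zero_power_prefix[OF assms(1)] assms(2) by auto
  also have "... = (\<Sum>k\<le>m. fps_const (D $ k) * G ^ k) $ i" by (simp add: fps_sum_nth)
  finally show ?thesis .
qed

lemma res0:
  fixes psi :: "'b::field_char_0 fps"
  assumes p0: "psi $ 0 \<noteq> 0" and j: "j \<ge> 1"
  shows "(inverse psi ^ j * fps_deriv (fps_X * psi)) $ (j - 1) = (if j = 1 then 1 else 0)"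
proof -
  define u where "u = inverse psi"
  have up: "u * psi = 1" unfolding u_def using p0 by (rule inverse_mult_eq_1)
  have e1: "u ^ j * fps_deriv (fps_X * psi) = u ^ (j - 1) + fps_X * (u ^ j * fps_deriv psi)"
  proof -
    have "u ^ j = u ^ (j - 1) * u" using j by (metis One_nat_def Suc_pred' less_eq_Suc_le power_Suc2)
    then have "u ^ j * psi = u ^ (j - 1)" using up by (simp add: mult.assoc)
    then show ?thesis by (simp add: algebra_simps)
  qed
  show ?thesis
  proof (cases "j = 1")
    case True
    then show ?thesis using e1 by (simp add: u_def)
  next
    case False
    then obtain m where m: "j = Suc (Suc m)" using j by (metis One_nat_def Suc_pred' less_eq_Suc_le not0_implies_Suc)
    define W where "W = u ^ Suc m"
    define Z where "Z = u ^ j * fps_deriv psi"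
    have du: "fps_deriv u = - fps_deriv psi * u\<^sup>2" unfolding u_def using p0 by (rule fps_inverse_deriv)
    have dW: "fps_deriv W = - (of_nat (Suc m) * Z)"
      unfolding W_def Z_def fps_deriv_power' du m by (simp add: power2_eq_square algebra_simps)
    have "(fps_deriv W) $ m = - (of_nat (Suc m) * Z $ m)" using dW
      by (metis fps_mult_left_const_nth fps_neg_nth fps_of_nat)
    then have "of_nat (Suc m) * W $ Suc m = - (of_nat (Suc m) * Z $ m)"
      by (simp add: fps_deriv_nth)
    then have "of_nat (Suc m) * (W $ Suc m + Z $ m) = 0"
      by (simp add: distrib_left del: of_nat_Suc)
    then have "W $ Suc m + Z $ m = 0"
      by (simp del: of_nat_Suc)
    moreover have "(u ^ j * fps_deriv (fps_X * psi)) $ (j - 1) = W $ Suc m + Z $ m"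
      unfolding e1 by (simp add: m W_def Z_def)
    ultimately show ?thesis using False by (simp add: u_def)
  qed
qed

lemma res1:
  fixes psi :: "'b::field_char_0 fps"
  assumes p0: "psi $ 0 \<noteq> 0" and kn: "k < n"
  shows "(inverse psi ^ n * fps_deriv (fps_X * psi) * (fps_X * psi) ^ k) $ (n - 1) = (if k = n - 1 then 1 else 0)"
proof -
  define j where "j = n - k"
  have j1: "j \<ge> 1" and nj: "n = j + k" using kn by (auto simp: j_def)
  have ik: "inverse psi ^ k * psi ^ k = 1" using inverse_mult_eq_1[OF p0] by (metis power_mult_distrib power_one)
  have "inverse psi ^ n * (fps_X * psi) ^ k = fps_X ^ k * inverse psi ^ j * (inverse psi ^ k * psi ^ k)"
    by (simp add: nj power_add power_mult_distrib mult_ac)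
  then have "inverse psi ^ n * (fps_X * psi) ^ k = fps_X ^ k * inverse psi ^ j" using ik by simp
  then have "inverse psi ^ n * fps_deriv (fps_X * psi) * (fps_X * psi) ^ k
      = fps_X ^ k * (inverse psi ^ j * fps_deriv (fps_X * psi))"
  proof -
    assume E: "inverse psi ^ n * (fps_X * psi) ^ k = fps_X ^ k * inverse psi ^ j"
    have "inverse psi ^ n * fps_deriv (fps_X * psi) * (fps_X * psi) ^ k
       = (inverse psi ^ n * (fps_X * psi) ^ k) * fps_deriv (fps_X * psi)" by (simp only: mult_ac)
    also have "... = fps_X ^ k * inverse psi ^ j * fps_deriv (fps_X * psi)" by (simp only: E)
    finally show ?thesis by (simp only: mult.assoc)
  qed
  then have "(inverse psi ^ n * fps_deriv (fps_X * psi) * (fps_X * psi) ^ k) $ (n - 1)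
     = (fps_X ^ k * (inverse psi ^ j * fps_deriv (fps_X * psi))) $ (n - 1)" by (simp only:)
  also have "... = (inverse psi ^ j * fps_deriv (fps_X * psi)) $ (j - 1)"
    using kn by (simp only: fps_X_power_mult_nth) (simp add: j_def)
  also have "... = (if j = 1 then 1 else 0)" by (rule res0[OF p0 j1])
  moreover have "(j = 1) = (k = n - 1)" using kn unfolding j_def by linarith
  ultimately show ?thesis by simp
qed

lemma lagrange_coeff:
  fixes psi :: "'b::field_char_0 fps"
  assumes p0: "psi $ 0 \<noteq> 0" and n: "n \<ge> 1"
  shows "of_nat n * fps_inv (fps_X * psi) $ n = (inverse psi ^ n) $ (n - 1)"
proof -
  define G where "G = fps_X * psi"
  have G0: "G $ 0 = 0" and G1: "G $ 1 \<noteq> 0" using p0 by (simp_all add: G_def)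
  define Hi where "Hi = fps_inv G"
  define D where "D = fps_deriv Hi"
  have "fps_deriv (Hi oo G) = (D oo G) * fps_deriv G" unfolding D_def by (rule fps_compose_deriv[OF G0])
  then have DG: "(D oo G) * fps_deriv G = 1" using fps_inv[OF G0 G1] by (simp add: Hi_def)
  define V where "V = inverse psi ^ n"
  have "V $ (n-1) = (V * fps_deriv G * (D oo G)) $ (n-1)" using DG by (simp add: mult_ac)
  also have "... = (V * fps_deriv G * (\<Sum>k\<le>n-1. fps_const (D $ k) * G ^ k)) $ (n-1)"
    by (rule prod_nth_cong) (rule compose_trunc[OF G0])
  also have "... = (\<Sum>k\<le>n-1. D $ k * (V * fps_deriv G * G ^ k) $ (n-1))"
  proof -
    have "\<And>k. V * fps_deriv G * (fps_const (D $ k) * G ^ k) = fps_const (D $ k) * (V * fps_deriv G * G ^ k)"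
      by (simp add: mult_ac)
    then show ?thesis by (simp only: sum_distrib_left fps_sum_nth fps_mult_left_const_nth)
  qed
  also have "... = (\<Sum>k\<le>n-1. D $ k * (if k = n - 1 then 1 else 0))"
    apply (rule sum.cong, rule refl)
    subgoal for k using res1[OF p0, of k n] n by (simp add: V_def G_def)
    done
  also have "... = (\<Sum>k\<le>n-1. if k = n - 1 then D $ k else 0)" by (rule sum.cong) auto
  also have "... = D $ (n-1)" using sum.delta[of "{..n-1}" "n-1" "\<lambda>k. D $ k"] by simp
  also have "... = of_nat n * Hi $ n" using n by (simp add: D_def)
  finally show ?thesis by (simp add: V_def Hi_def G_def)
qed

definition MS :: "'i set \<Rightarrow> nat \<Rightarrow> ('i \<Rightarrow> nat) set" where
  "MS I j = {\<rho>. (\<forall>i. i \<notin> I \<longrightarrow> \<rho> i = 0) \<and> (\<Sum>i\<in>I. \<rho> i) = j}"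

lemma MS_finite:
  assumes "finite I" shows "finite (MS I j)"
proof -
  have "MS I j \<subseteq> {f. \<forall>x. (x \<in> I \<longrightarrow> f x \<in> {..j}) \<and> (x \<notin> I \<longrightarrow> f x = 0)}"
  proof
    fix \<rho> assume r: "\<rho> \<in> MS I j"
    have "\<rho> x \<le> j" if "x \<in> I" for x
      using r that assms unfolding MS_def by (auto intro: member_le_sum[of x I \<rho>, simplified])
    then show "\<rho> \<in> {f. \<forall>x. (x \<in> I \<longrightarrow> f x \<in> {..j}) \<and> (x \<notin> I \<longrightarrow> f x = 0)}"
      using r unfolding MS_def by auto
  qed
  then show ?thesis by (rule finite_subset) (intro finite_set_of_finite_funs assms finite_atMost)
qed

lemma MS_empty: "MS {} j = (if j = 0 then {\<lambda>_. 0} else {})"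
  unfolding MS_def by auto

lemma multinomial:
  fixes Y :: "'i \<Rightarrow> 'b::field_char_0 fps"
  assumes "finite I"
  shows "(\<Sum>i\<in>I. Y i) ^ j =
    (\<Sum>\<rho>\<in>MS I j. fps_const (fact j / (\<Prod>i\<in>I. fact (\<rho> i))) * (\<Prod>i\<in>I. Y i ^ \<rho> i))"
  using assms
proof (induction I arbitrary: j rule: finite_induct)
  case empty
  then show ?case by (cases j) (simp_all add: MS_empty)
next
  case (insert k I)
  define S where "S = (\<Sum>i\<in>I. Y i)"
  define F where "F = (\<lambda>(p::nat, \<rho>::'i \<Rightarrow> nat). of_nat (j choose p) * Y k ^ p *
      (fps_const (fact (j - p) / (\<Prod>i\<in>I. fact (\<rho> i))) * (\<Prod>i\<in>I. Y i ^ \<rho> i)))"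
  have "(\<Sum>i\<in>insert k I. Y i) ^ j = (Y k + S) ^ j" using insert by (simp add: S_def)
  also have "... = (\<Sum>p\<le>j. of_nat (j choose p) * Y k ^ p * S ^ (j - p))" by (rule binomial_ring)
  also have "... = (\<Sum>p\<le>j. \<Sum>\<rho>\<in>MS I (j - p). F (p, \<rho>))"
    by (simp add: S_def insert.IH F_def sum_distrib_left)
  also have "... = (\<Sum>x\<in>Sigma {..j} (\<lambda>p. MS I (j - p)). F x)"
    using sum.Sigma[of "{..j}" "\<lambda>p. MS I (j-p)" "\<lambda>p \<rho>. F (p,\<rho>)"] MS_finite[OF insert.hyps(1)]
    by (simp add: case_prod_eta)
  also have "... = (\<Sum>\<sigma>\<in>MS (insert k I) j. fps_const (fact j / (\<Prod>i\<in>insert k I. fact (\<sigma> i))) *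
          (\<Prod>i\<in>insert k I. Y i ^ \<sigma> i))"
  proof (rule sum.reindex_bij_witness[where i = "\<lambda>\<sigma>. (\<sigma> k, \<sigma>(k := 0))" and j = "\<lambda>(p, \<rho>). \<rho>(k := p)"])
    fix a assume a: "a \<in> Sigma {..j} (\<lambda>p. MS I (j - p))"
    then obtain p \<rho> where a': "a = (p, \<rho>)" "p \<le> j" "\<rho> \<in> MS I (j - p)" by auto
    have rk: "\<rho> k = 0" using a'(3) insert.hyps unfolding MS_def by auto
    show "(\<lambda>\<sigma>. (\<sigma> k, \<sigma>(k := 0))) (case a of (p, \<rho>) \<Rightarrow> \<rho>(k := p)) = a"
      using a' rk by auto
    have sI: "(\<Sum>i\<in>I. (\<rho>(k := p)) i) = (\<Sum>i\<in>I. \<rho> i)"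
      using insert.hyps by (intro sum.cong) auto
    show "(case a of (p, \<rho>) \<Rightarrow> \<rho>(k := p)) \<in> MS (insert k I) j"
      using a' insert.hyps sI unfolding MS_def by auto
    have pI1: "(\<Prod>i\<in>I. fact ((\<rho>(k := p)) i) :: 'b) = (\<Prod>i\<in>I. fact (\<rho> i))"
      using insert.hyps by (auto intro: prod.cong)
    have pI2: "(\<Prod>i\<in>I. Y i ^ (\<rho>(k := p)) i) = (\<Prod>i\<in>I. Y i ^ \<rho> i)"
      using insert.hyps by (auto intro: prod.cong)
    define P where "P = (\<Prod>i\<in>I. fact (\<rho> i) :: 'b)"
    have P: "P \<noteq> 0" using insert.hyps(1) by (simp add: prod_zero_iff P_def)
    have c: "fact j / (fact p * P) = of_nat (j choose p) * (fact (j - p) / P)"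
      unfolding binomial_fact[OF a'(2), where 'a='b] using P by (simp add: field_simps)
    have "fps_const (fact j / (\<Prod>i\<in>insert k I. fact ((\<rho>(k := p)) i))) *
          (\<Prod>i\<in>insert k I. Y i ^ (\<rho>(k := p)) i)
        = fps_const (fact j / (fact p * P)) * (Y k ^ p * (\<Prod>i\<in>I. Y i ^ \<rho> i))"
      using insert.hyps pI1 pI2 by (simp add: P_def)
    also have "... = fps_const (of_nat (j choose p)) * fps_const (fact (j - p) / P) * (Y k ^ p * (\<Prod>i\<in>I. Y i ^ \<rho> i))"
      unfolding c by (simp only: fps_const_mult)
    also have "... = of_nat (j choose p) * Y k ^ p * (fps_const (fact (j - p) / P) * (\<Prod>i\<in>I. Y i ^ \<rho> i))"
      by (simp only: fps_of_nat mult_ac)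
    also have "... = F a" by (simp add: F_def a'(1) P_def)
    finally show "fps_const (fact j / (\<Prod>i\<in>insert k I. fact ((case a of (p, \<rho>) \<Rightarrow> \<rho>(k := p)) i))) *
          (\<Prod>i\<in>insert k I. Y i ^ (case a of (p, \<rho>) \<Rightarrow> \<rho>(k := p)) i) = F a"
      using a'(1) by simp
  next
    fix b assume b: "b \<in> MS (insert k I) j"
    show "(case (b k, b(k := 0)) of (p, \<rho>) \<Rightarrow> \<rho>(k := p)) = b" by auto
    have s0: "(\<Sum>i\<in>I. (b(k:=0)) i) = (\<Sum>i\<in>I. b i)"
      using insert.hyps by (intro sum.cong) auto
    have s: "(\<Sum>i\<in>insert k I. b i) = b k + (\<Sum>i\<in>I. (b(k:=0)) i)"
      using insert.hyps s0 by simp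
    show "(b k, b(k := 0)) \<in> Sigma {..j} (\<lambda>p. MS I (j - p))"
      using b s unfolding MS_def by auto
  qed
  finally show ?case .
qed

lemma inv_pow_expand:
  fixes w :: "'b::field_char_0 fps"
  assumes w0: "w $ 0 = 0"
  shows "inverse ((1 + w) ^ n) = fps_binomial (- of_nat n) oo w"
proof -
  have e1: "(1 + w)^n = (1 + fps_X)^n oo w"
    using w0 by (simp add: fps_compose_power[symmetric] fps_compose_add_distrib)
  have e2: "(1 + fps_X :: 'b fps)^n * fps_binomial (- of_nat n) = 1"
    unfolding fps_binomial_minus_of_nat by (rule inverse_mult_eq_1') simp
  have "(1 + w)^n * (fps_binomial (- of_nat n) oo w) = ((1+fps_X)^n * fps_binomial (- of_nat n)) oo w"
    unfolding e1 by (simp add: fps_compose_mult_distrib w0)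
  also have "... = 1" unfolding e2 by simp
  finally show ?thesis by (rule fps_inverse_unique)
qed

lemma psi_inv_pow:
  fixes w :: "'b::field_char_0 fps"
  assumes w0: "w $ 0 = 0" and a: "a \<noteq> 0"
  shows "inverse (fps_const a * (1 + w)) ^ n = fps_const (inverse a ^ n) * (fps_binomial (- of_nat n) oo w)"
proof -
  have "(fps_const a * (1 + w)) ^ n * (fps_const (inverse a ^ n) * (fps_binomial (- of_nat n) oo w))
     = fps_const (a ^ n * inverse a ^ n) * ((1 + w) ^ n * (fps_binomial (- of_nat n) oo w))"
    by (simp add: power_mult_distrib fps_const_power mult_ac)
  also have "... = 1"
  proof -
    have "((1+w)^n) $ 0 \<noteq> 0" using w0 by (simp add: fps_nth_power_0)
    then show ?thesis using a
      by (simp add: inv_pow_expand[OF w0, symmetric] inverse_mult_eq_1' power_mult_distrib[symmetric])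
  qed
  finally have "inverse ((fps_const a * (1 + w)) ^ n) = fps_const (inverse a ^ n) * (fps_binomial (- of_nat n) oo w)"
    by (rule fps_inverse_unique)
  then show ?thesis by (simp add: fps_inverse_power)
qed

lemma pow_trunc:
  fixes A B :: "'a::comm_semiring_1 fps"
  assumes "\<And>i. i \<le> m \<Longrightarrow> A $ i = B $ i" and "m' \<le> m"
  shows "(A ^ j) $ m' = (B ^ j) $ m'"
  using assms(2)
proof (induction j arbitrary: m')
  case 0
  then show ?case by simp
next
  case (Suc j)
  show ?case unfolding power_Suc fps_mult_nth
    using Suc assms(1) by (intro sum.cong) auto
qed

lemma multinomial_coeff:
  fixes c :: "'i \<Rightarrow> 'b::field_char_0"
  assumes "finite I"
  shows "((\<Sum>i\<in>I. fps_const (c i) * fps_X ^ e i) ^ j) $ m =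
    (\<Sum>\<rho>\<in>{\<rho>\<in>MS I j. (\<Sum>i\<in>I. e i * \<rho> i) = m}. fact j / (\<Prod>i\<in>I. fact (\<rho> i)) * (\<Prod>i\<in>I. c i ^ \<rho> i))"
proof -
  have pr: "(\<Prod>i\<in>I. (fps_const (c i) * fps_X ^ e i) ^ \<rho> i) =
      fps_const (\<Prod>i\<in>I. c i ^ \<rho> i) * fps_X ^ (\<Sum>i\<in>I. e i * \<rho> i)" for \<rho>
    using assms
  proof (induction I rule: finite_induct)
    case empty then show ?case by simp
  next
    case (insert x F)
    then show ?case by (simp add: power_mult_distrib fps_const_power power_add power_mult[symmetric] mult_ac)
  qed
  have "((\<Sum>i\<in>I. fps_const (c i) * fps_X ^ e i) ^ j) $ m =
     (\<Sum>\<rho>\<in>MS I j. fact j / (\<Prod>i\<in>I. fact (\<rho> i)) * (\<Prod>i\<in>I. c i ^ \<rho> i) *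
         (if m = (\<Sum>i\<in>I. e i * \<rho> i) then 1 else 0))"
    unfolding multinomial[OF assms] fps_sum_nth pr
    by (intro sum.cong refl) (simp add: mult.assoc fps_X_power_nth)
  also have "... = (\<Sum>\<rho>\<in>{\<rho>\<in>MS I j. (\<Sum>i\<in>I. e i * \<rho> i) = m}. fact j / (\<Prod>i\<in>I. fact (\<rho> i)) * (\<Prod>i\<in>I. c i ^ \<rho> i))"
  proof -
    have "(\<Sum>\<rho>\<in>MS I j. fact j / (\<Prod>i\<in>I. fact (\<rho> i)) * (\<Prod>i\<in>I. c i ^ \<rho> i) *
         (if m = (\<Sum>i\<in>I. e i * \<rho> i) then 1 else 0)) =
      (\<Sum>\<rho>\<in>MS I j. if (\<Sum>i\<in>I. e i * \<rho> i) = m then fact j / (\<Prod>i\<in>I. fact (\<rho> i)) * (\<Prod>i\<in>I. c i ^ \<rho> i) else 0)"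
      by (intro sum.cong refl) auto
    then show ?thesis by (simp only: sum.inter_filter[OF MS_finite[OF assms]])
  qed
  finally show ?thesis .
qed

definition A1f :: "nat \<Rightarrow> (nat \<Rightarrow> 'b::field_char_0) \<Rightarrow> 'b" where
  "A1f n X = inverse (X 1) ^ (2 * n - 1) *
     (\<Sum>r\<in>A_idx n.
        ((-1) ^ (n - 1 - r 1) * fact (2 * n - 2 - r 1) /
                   (\<Prod>i=2..n. fact (r i) * fact i ^ r i)) *
        (\<Prod>i=1..n. X i ^ r i))"

lemma gchoose_neg:
  assumes "n \<ge> 1"
  shows "((- of_nat n :: 'b::field_char_0) gchoose j) = (-1) ^ j * of_nat ((n - 1 + j) choose j)"
proof -
  have eq: "(of_nat j - (- of_nat n) - 1 :: 'b) = of_nat (n - 1 + j)" using assms by (simp add: of_nat_diff)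
  have "((- of_nat n :: 'b) gchoose j) = (-1)^j * ((of_nat j - (- of_nat n) - 1) gchoose j)"
    by (rule gbinomial_negated_upper)
  also have "... = (-1)^j * (of_nat (n-1+j) gchoose j)" unfolding eq ..
  finally show ?thesis by (simp add: binomial_gbinomial)
qed

lemma alg_eq:
  fixes a Pf Pi Px fj fn1 C :: "'b::field_char_0"
  assumes a: "a \<noteq> 0" and Pf: "Pf \<noteq> 0" and Pi: "Pi \<noteq> 0" and F: "F = fn1 * C * fj"
    and N: "N1 = (n + j) + N2"
  shows "fn1 * inverse a ^ n * (s * C) * (fj / Pf * (Px / (a ^ j * Pi))) =
         inverse a ^ N1 * (s * F / (Pf * Pi)) * (a ^ N2 * Px)"
proof -
  have "inverse a ^ N1 * a ^ N2 = inverse a ^ n * inverse a ^ j"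
    using a by (simp add: N power_add field_simps)
  then show ?thesis using a Pf Pi unfolding F by (simp add: field_simps)
qed

lemma term_eq:
  fixes X :: "nat \<Rightarrow> 'b::field_char_0"
  assumes a: "a \<noteq> 0" and n: "n \<ge> 1" and j: "j \<le> n - 1" and s: "(\<Sum>i=2..n. \<rho> i) = j"
  shows "fact (n - 1) * inverse a ^ n * ((- of_nat n) gchoose j) *
     (fact j / (\<Prod>i=2..n. fact (\<rho> i)) * (\<Prod>i=2..n. (X i / (a * fact i)) ^ \<rho> i))
   = inverse a ^ (2 * n - 1) * ((-1) ^ (n - 1 - (n - 1 - j)) * fact (2 * n - 2 - (n - 1 - j)) /
        (\<Prod>i=2..n. fact (\<rho> i) * fact i ^ \<rho> i)) * (a ^ (n - 1 - j) * (\<Prod>i=2..n. X i ^ \<rho> i))"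
proof -
  have e1: "n - 1 - (n - 1 - j) = j" "2 * n - 2 - (n - 1 - j) = n - 1 + j" using j n by auto
  have pr: "(\<Prod>i=2..n. (X i / (a * fact i)) ^ \<rho> i) = (\<Prod>i=2..n. X i ^ \<rho> i) / (a ^ j * (\<Prod>i=2..n. fact i ^ \<rho> i))"
    by (simp add: power_divide power_mult_distrib prod.distrib prod_dividef s[symmetric] power_sum)
  have pd: "(\<Prod>i=2..n. fact (\<rho> i) * fact i ^ \<rho> i :: 'b) = (\<Prod>i=2..n. fact (\<rho> i)) * (\<Prod>i=2..n. fact i ^ \<rho> i)"
    by (simp add: prod.distrib)
  have F: "(fact (n - 1 + j) :: 'b) = fact (n - 1) * of_nat ((n - 1 + j) choose j) * fact j"
  proof -
    have "fact j * fact (n - 1 + j - j) * ((n - 1 + j) choose j) = fact (n - 1 + j)"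
      by (rule binomial_fact_lemma) simp
    then have "(of_nat (fact j * fact (n - 1) * ((n - 1 + j) choose j)) :: 'b) = of_nat (fact (n - 1 + j))" by simp
    then show ?thesis by (simp add: of_nat_mult mult_ac)
  qed
  show ?thesis
    unfolding e1 pr pd gchoose_neg[OF n]
    by (rule alg_eq[OF a _ _ F]) (use n j in \<open>auto simp: prod_zero_iff\<close>)
qed

lemma wsum:
  fixes \<rho> :: "nat \<Rightarrow> nat" shows "(\<Sum>i=2..n. i * \<rho> i) = (\<Sum>i=2..n. (i - 1) * \<rho> i) + (\<Sum>i=2..n. \<rho> i)"
proof -
  have "(\<Sum>i=2..n. i * \<rho> i) = (\<Sum>i=2..n. (i - 1) * \<rho> i + \<rho> i)"
    by (intro sum.cong refl) (case_tac x, auto)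
  then show ?thesis by (simp add: sum.distrib)
qed

lemma split1:
  fixes f :: "nat \<Rightarrow> 'c::comm_monoid_add"
  assumes "n \<ge> 1" shows "(\<Sum>i=1..n. f i) = f 1 + (\<Sum>i=2..n. f i)"
  using sum.atLeast_Suc_atMost[OF assms, of f] by (simp add: numeral_2_eq_2)

lemma split1p:
  fixes f :: "nat \<Rightarrow> 'c::comm_monoid_mult"
  assumes "n \<ge> 1" shows "(\<Prod>i=1..n. f i) = f 1 * (\<Prod>i=2..n. f i)"
  using prod.atLeast_Suc_atMost[OF assms, of f] by (simp add: numeral_2_eq_2)

lemma expand:
  fixes X :: "nat \<Rightarrow> 'b::field_char_0"
  assumes a: "X 1 \<noteq> 0" and n: "n \<ge> 1"
  shows "fact (n - 1) * (inverse (Abs_fps (\<lambda>i. X (Suc i) / fact (Suc i))) ^ n) $ (n - 1) = A1f n X"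
proof -
  define a where "a = X 1"
  have a': "a \<noteq> 0" using a by (simp add: a_def)
  define b where "b = (\<lambda>i. X i / (a * fact i))"
  define w where "w = Abs_fps (\<lambda>i. if i = 0 then 0 else X (Suc i) / (a * fact (Suc i)))"
  have psi: "Abs_fps (\<lambda>i. X (Suc i) / fact (Suc i)) = fps_const a * (1 + w)"
    using a' by (auto simp: fps_eq_iff w_def a_def)
  have w0: "w $ 0 = 0" by (simp add: w_def)
  define wt where "wt = (\<Sum>i\<in>{2..n}. fps_const (b i) * fps_X ^ (i - 1))"
  have wt: "w $ i = wt $ i" if "i \<le> n - 1" for i
  proof -
    have "wt $ i = (\<Sum>l\<in>{2..n}. if l = Suc i then b l else 0)"
      unfolding wt_def fps_sum_nth by (intro sum.cong) (auto simp: fps_X_power_nth)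
    also have "... = (if i \<ge> 1 then b (Suc i) else 0)" using that n by (simp add: sum.delta)
    finally show ?thesis by (simp add: w_def b_def)
  qed
  define MSw where "MSw j = {\<rho>\<in>MS {2..n} j. (\<Sum>i\<in>{2..n}. (i - 1) * \<rho> i) = n - 1}" for j
  define T where "T j \<rho> = fact (n-1) * inverse a ^ n * ((- of_nat n) gchoose j) *
       (fact j / (\<Prod>i=2..n. fact (\<rho> i)) * (\<Prod>i=2..n. b i ^ \<rho> i))" for j \<rho>
  define R where "R r = inverse a ^ (2 * n - 1) *
        (((-1) ^ (n - 1 - r 1) * fact (2 * n - 2 - r 1) / (\<Prod>i=2..n. fact (r i) * fact i ^ r i)) *
        (\<Prod>i=1..n. X i ^ r i))" for r
  have "fact (n - 1) * (inverse (Abs_fps (\<lambda>i. X (Suc i) / fact (Suc i))) ^ n) $ (n - 1)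
      = fact (n - 1) * (inverse a ^ n * (\<Sum>j=0..n-1. ((- of_nat n) gchoose j) * (w ^ j) $ (n - 1)))"
    unfolding psi psi_inv_pow[OF w0 a'] by (simp add: fps_compose_nth)
  also have "... = (\<Sum>j=0..n-1. \<Sum>\<rho>\<in>MSw j. T j \<rho>)"
  proof -
    have "(w ^ j) $ (n - 1) = (wt ^ j) $ (n - 1)" for j by (rule pow_trunc[OF wt]) auto
    then show ?thesis
      unfolding wt_def multinomial_coeff[OF finite_atLeastAtMost] MSw_def T_def
      by (simp add: sum_distrib_left mult_ac)
  qed
  also have "... = (\<Sum>x\<in>Sigma {0..n-1} MSw. case x of (j, \<rho>) \<Rightarrow> T j \<rho>)"
  proof (rule sum.Sigma)
    show "\<forall>j\<in>{0..n - 1}. finite (MSw j)"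
      unfolding MSw_def using MS_finite[of "{2..n}"] by auto
  qed simp
  also have "... = (\<Sum>r\<in>A_idx n. R r)"
  proof (rule sum.reindex_bij_witness[where i = "\<lambda>r. (\<Sum>i=2..n. r i, r(1 := 0))" and j = "\<lambda>(j, \<rho>). \<rho>(1 := n - 1 - j)"])
    fix x assume x: "x \<in> Sigma {0..n-1} MSw"
    then obtain j \<rho> where x': "x = (j, \<rho>)" "j \<le> n - 1" "\<rho> \<in> MSw j" by auto
    have r0: "\<rho> i = 0" if "i \<notin> {2..n}" for i using x'(3) that unfolding MSw_def MS_def by auto
    have rs: "(\<Sum>i=2..n. \<rho> i) = j" and rw: "(\<Sum>i=2..n. (i - 1) * \<rho> i) = n - 1"
      using x'(3) unfolding MSw_def MS_def by auto
    have c1: "(\<Sum>i=2..n. (\<rho>(1 := n - 1 - j)) i) = (\<Sum>i=2..n. \<rho> i)" by (intro sum.cong) auto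
    have c2: "(\<Sum>i=2..n. i * (\<rho>(1 := n - 1 - j)) i) = (\<Sum>i=2..n. i * \<rho> i)" by (intro sum.cong) auto
    have c3: "(\<Prod>i=2..n. fact ((\<rho>(1 := n - 1 - j)) i) * fact i ^ (\<rho>(1 := n - 1 - j)) i) =
              (\<Prod>i=2..n. fact (\<rho> i) * fact i ^ \<rho> i :: 'b)" by (intro prod.cong) auto
    have c4: "(\<Prod>i=2..n. X i ^ (\<rho>(1 := n - 1 - j)) i) = (\<Prod>i=2..n. X i ^ \<rho> i)" by (intro prod.cong) auto
    show "(\<lambda>r. (\<Sum>i=2..n. r i, r(1 := 0))) (case x of (j, \<rho>) \<Rightarrow> \<rho>(1 := n - 1 - j)) = x"
      using x' c1 rs r0[of 1] by auto
    have m1: "(\<Sum>i=1..n. (\<rho>(1 := n-1-j)) i) = n - 1"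
      using split1[OF n, of "\<rho>(1 := n-1-j)"] c1 rs x'(2) by simp
    have m2: "(\<Sum>i=1..n. i * (\<rho>(1 := n-1-j)) i) = 2*n-2"
      using split1[OF n, of "\<lambda>i. i * (\<rho>(1 := n-1-j)) i"] c2 wsum[of \<rho> n] rs rw x'(2) by simp
    show "(case x of (j, \<rho>) \<Rightarrow> \<rho>(1 := n - 1 - j)) \<in> A_idx n"
      unfolding A_idx_def x'(1) using m1 m2 r0 by auto
    show "R (case x of (j, \<rho>) \<Rightarrow> \<rho>(1 := n - 1 - j)) = (case x of (j, \<rho>) \<Rightarrow> T j \<rho>)"
    proof -
      have "R (\<rho>(1 := n - 1 - j)) = inverse a ^ (2 * n - 1) * ((-1) ^ (n - 1 - (n - 1 - j)) * fact (2 * n - 2 - (n - 1 - j)) /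
        (\<Prod>i=2..n. fact (\<rho> i) * fact i ^ \<rho> i)) * (a ^ (n - 1 - j) * (\<Prod>i=2..n. X i ^ \<rho> i))"
        unfolding R_def split1p[OF n] c3 c4 by (simp add: a_def)
      also have "... = T j \<rho>"
        unfolding T_def b_def by (rule term_eq[OF a' n x'(2) rs, symmetric])
      finally show ?thesis using x'(1) by simp
    qed
  next
    fix r assume r: "r \<in> A_idx n"
    have r0: "r i = 0" if "i \<notin> {1..n}" for i using r that unfolding A_idx_def by auto
    have s1: "r 1 + (\<Sum>i=2..n. r i) = n - 1" using r split1[OF n, of r] unfolding A_idx_def by auto
    have s2: "r 1 + (\<Sum>i=2..n. i * r i) = 2 * n - 2" using r split1[OF n, of "\<lambda>i. i * r i"] unfolding A_idx_def by auto
    have c1: "(\<Sum>i=2..n. (r(1 := 0)) i) = (\<Sum>i=2..n. r i)" by (intro sum.cong) auto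
    have c2: "(\<Sum>i=2..n. (i - 1) * (r(1 := 0)) i) = (\<Sum>i=2..n. (i - 1) * r i)" by (intro sum.cong) auto
    have e: "n - Suc (\<Sum>i=2..n. r i) = r (Suc 0)" using s1 by simp
    show "(case (\<Sum>i=2..n. r i, r(1 := 0)) of (j, \<rho>) \<Rightarrow> \<rho>(1 := n - 1 - j)) = r"
      using e by simp
    show "(\<Sum>i=2..n. r i, r(1 := 0)) \<in> Sigma {0..n-1} MSw"
      unfolding MSw_def MS_def using s1 s2 c1 c2 wsum[of r n] r0 by auto
  qed
  also have "... = A1f n X" unfolding A1f_def R_def a_def by (simp add: sum_distrib_left mult.assoc)
  finally show ?thesis .
qed

lemma core_field:
  fixes X :: "nat \<Rightarrow> 'b::field_char_0"
  assumes a: "X 1 \<noteq> 0"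
  shows "Abs_fps (\<lambda>n. if n = 0 then 0 else X n / fact n) oo
         Abs_fps (\<lambda>k. if k = 0 then 0 else A1f k X / fact k) = fps_X"
proof -
  define psi where "psi = Abs_fps (\<lambda>i. X (Suc i) / fact (Suc i))"
  have p0: "psi $ 0 \<noteq> 0" using a by (simp add: psi_def)
  have G: "Abs_fps (\<lambda>n. if n = 0 then 0 else X n / fact n) = fps_X * psi"
  proof (rule fps_ext)
    fix n show "Abs_fps (\<lambda>n. if n = 0 then 0 else X n / fact n) $ n = (fps_X * psi) $ n"
      by (cases n) (simp_all add: psi_def del: fact_Suc)
  qed
  have H: "Abs_fps (\<lambda>k. if k = 0 then 0 else A1f k X / fact k) = fps_inv (fps_X * psi)"
  proof (rule fps_ext)
    fix k
    show "Abs_fps (\<lambda>k. if k = 0 then 0 else A1f k X / fact k) $ k = fps_inv (fps_X * psi) $ k"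
    proof (cases "k = 0")
      case True then show ?thesis by (simp add: fps_inv_def)
    next
      case False
      then have k: "k \<ge> 1" by simp
      have L: "of_nat k * fps_inv (fps_X * psi) $ k = (inverse psi ^ k) $ (k - 1)"
        by (rule lagrange_coeff[OF p0 k])
      have E: "fact (k - 1) * (inverse psi ^ k) $ (k - 1) = A1f k X"
        using expand[of X k, OF a k] by (simp add: psi_def)
      have "A1f k X = fact k * fps_inv (fps_X * psi) $ k"
        unfolding E[symmetric] L[symmetric] using k fact_reduce[of k, where 'a='b] by (simp add: mult_ac)
      then have "fps_inv (fps_X * psi) $ k = A1f k X / fact k"
        by (simp add: eq_divide_eq mult.commute)
      then show ?thesis using False by simp
    qed
  qed
  have G0: "(fps_X * psi) $ 0 = 0" and G1: "(fps_X * psi) $ 1 \<noteq> 0" using p0 by simp_all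
  show ?thesis unfolding G H by (rule fps_inv_right[OF G0 G1])
qed

definition ev :: "'a::comm_ring_1 fps \<Rightarrow> 'a fps fps \<Rightarrow> 'a fps" where
  "ev s F = Abs_fps (\<lambda>N. \<Sum>n\<le>N. (F $ n * s ^ n) $ N)"

lemma ev_nth_def: "ev s F $ N = (\<Sum>n\<le>N. (F $ n * s ^ n) $ N)"
  by (simp add: ev_def)

lemma zero_low:
  fixes s A :: "'a::comm_ring_1 fps"
  assumes s0: "s $ 0 = 0" and "N < n"
  shows "(A * s ^ n) $ N = 0"
  unfolding fps_mult_nth using startsby_zero_power_prefix[OF s0] assms(2)
  by (intro sum.neutral) auto

lemma ev_nth:
  fixes s :: "'a::comm_ring_1 fps"
  assumes s0: "s $ 0 = 0" and "N \<le> M"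
  shows "ev s F $ N = (\<Sum>n\<le>M. F $ n * s ^ n) $ N"
proof -
  have "(\<Sum>n\<le>M. F $ n * s ^ n) $ N = (\<Sum>n\<le>M. (F $ n * s ^ n) $ N)" by (simp add: fps_sum_nth)
  also have "... = (\<Sum>n\<le>N. (F $ n * s ^ n) $ N)"
    by (rule sum.mono_neutral_right) (use assms zero_low[OF s0] in auto)
  finally show ?thesis by (simp add: ev_def)
qed

lemma ev_cong:
  assumes "\<And>k. k \<le> N \<Longrightarrow> F $ k = F' $ k"
  shows "ev s F $ N = ev s F' $ N"
  using assms by (simp add: ev_def)

lemma ev_add: "ev s (F + G) = ev s F + ev s G"
  by (simp add: ev_def fps_eq_iff distrib_right sum.distrib)

lemma ev_const:
  fixes s :: "'a::comm_ring_1 fps"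
  shows "ev s (fps_const c) = c"
proof (rule fps_ext)
  fix N
  have "ev s (fps_const c) $ N = (\<Sum>n\<le>N. (if n = 0 then (c * s ^ n) $ N else 0))"
    unfolding ev_nth_def by (intro sum.cong refl) auto
  also have "... = c $ N" by (simp add: sum.delta')
  finally show "ev s (fps_const c) $ N = c $ N" .
qed

lemma ev_X:
  fixes s :: "'a::comm_ring_1 fps"
  assumes s0: "s $ 0 = 0"
  shows "ev s fps_X = s"
proof (rule fps_ext)
  fix N
  have "ev s fps_X $ N = (\<Sum>n\<le>N. (if n = 1 then s $ N else 0))"
    unfolding ev_nth_def by (intro sum.cong refl) (auto simp: fps_X_def)
  also have "... = s $ N" using s0 by (cases N) (simp_all add: sum.delta')
  finally show "ev s fps_X $ N = s $ N" .
qed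

lemma ev_mult:
  fixes s :: "'a::comm_ring_1 fps"
  assumes s0: "s $ 0 = 0"
  shows "ev s (F * G) = ev s F * ev s G"
proof (rule fps_ext)
  fix N
  define PF where "PF = (\<Sum>k\<le>N. F $ k * s ^ k)"
  define PG where "PG = (\<Sum>k\<le>N. G $ k * s ^ k)"
  have "(ev s F * ev s G) $ N = (PF * PG) $ N"
    unfolding fps_mult_nth PF_def PG_def
    by (intro sum.cong refl) (simp add: ev_nth[OF s0, where M=N])
  also have "... = (\<Sum>(k, l)\<in>{..N} \<times> {..N}. (F $ k * G $ l * s ^ (k + l)) $ N)"
    unfolding PF_def PG_def sum_product fps_sum_nth sum.cartesian_product
    by (intro sum.cong refl) (auto simp: power_add mult_ac)
  also have "... = (\<Sum>(k, l)\<in>{(k, l). k + l \<le> N}. (F $ k * G $ l * s ^ (k + l)) $ N)"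
  proof (rule sum.mono_neutral_right)
    show "\<forall>x\<in>{..N} \<times> {..N} - {(k, l). k + l \<le> N}. (case x of (k, l) \<Rightarrow> (F $ k * G $ l * s ^ (k + l)) $ N) = 0"
    proof (intro ballI)
      fix x assume "x \<in> {..N} \<times> {..N} - {(k, l). k + l \<le> N}"
      then obtain k l where "x = (k, l)" "N < k + l" by auto
      then show "(case x of (k, l) \<Rightarrow> (F $ k * G $ l * s ^ (k + l)) $ N) = 0"
        using zero_low[OF s0, of N "k + l" "F $ k * G $ l"] by simp
    qed
  qed auto
  also have "... = (\<Sum>(k, l)\<in>{(k, l). k + l \<le> N}. F $ k * G $ l * s ^ (k + l)) $ N"
    by (simp add: fps_sum_nth case_prod_unfold)
  also have "... = (\<Sum>m=0..N. \<Sum>i=0..m. F $ i * G $ (m - i) * s ^ m) $ N"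
    by (simp only: sum_pair_less_iff)
  also have "... = ev s (F * G) $ N"
    by (simp add: ev_nth[OF s0 order.refl] fps_mult_nth sum_distrib_right atLeast0AtMost)
  finally show "ev s (F * G) $ N = (ev s F * ev s G) $ N" by simp
qed

lemma ev_one: "ev s 1 = (1 :: 'a::comm_ring_1 fps)"
  using ev_const[of s 1] by simp

lemma ev_zero: "ev s 0 = (0 :: 'a::comm_ring_1 fps)"
  using ev_const[of s 0] by simp

lemma ev_power:
  fixes s :: "'a::comm_ring_1 fps"
  assumes s0: "s $ 0 = 0"
  shows "ev s (F ^ k) = ev s F ^ k"
  by (induction k) (simp_all add: ev_one ev_mult[OF s0])

lemma ev_sum:
  fixes s :: "'a::comm_ring_1 fps"
  shows "ev s (\<Sum>k\<in>A. F k) = (\<Sum>k\<in>A. ev s (F k))"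
  by (induction A rule: infinite_finite_induct) (simp_all add: ev_zero ev_add)

lemma ev_0:
  fixes s :: "'a::comm_ring_1 fps"
  assumes "G $ 0 = 0"
  shows "ev s G $ 0 = 0"
  using assms by (simp add: ev_nth_def)

lemma ev_compose:
  fixes s :: "'a::comm_ring_1 fps"
  assumes s0: "s $ 0 = 0" and G0: "G $ 0 = 0"
  shows "ev s (F oo G) = ev (ev s G) F"
proof (rule fps_ext)
  fix N
  have "ev s (F oo G) $ N = ev s (\<Sum>k\<le>N. fps_const (F $ k) * G ^ k) $ N"
    by (rule ev_cong) (rule compose_trunc[OF G0])
  also have "ev s (\<Sum>k\<le>N. fps_const (F $ k) * G ^ k) = (\<Sum>k\<le>N. F $ k * ev s G ^ k)"
    by (simp add: ev_sum ev_mult[OF s0] ev_const ev_power[OF s0])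
  also have "(\<Sum>k\<le>N. F $ k * ev s G ^ k) $ N = ev (ev s G) F $ N"
    by (rule ev_nth[OF ev_0[OF G0] order.refl, symmetric])
  finally show "ev s (F oo G) $ N = ev (ev s G) F $ N" .
qed

lemma ev_sums:
  fixes s :: "'a::comm_ring_1 fps"
  assumes s0: "s $ 0 = 0"
  shows "(\<lambda>k. F $ k * s ^ k) sums ev s F"
  unfolding sums_def
proof (rule tendsto_fpsI)
  fix n
  show "\<forall>\<^sub>F m in sequentially. (\<Sum>k<m. F $ k * s ^ k) $ n = ev s F $ n"
  proof (rule eventually_sequentiallyI[of "Suc n"])
    fix m assume m: "Suc n \<le> m"
    then obtain m' where m': "m = Suc m'" by (cases m) auto
    show "(\<Sum>k<m. F $ k * s ^ k) $ n = ev s F $ n"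
      unfolding m' lessThan_Suc_atMost using m m' by (simp add: ev_nth[OF s0])
  qed
qed

definition mp :: "'a::field_char_0 fps fps \<Rightarrow> 'a fls fps" where
  "mp F = Abs_fps (\<lambda>k. fps_to_fls (F $ k))"

lemma ftf_sum: "fps_to_fls (\<Sum>i\<in>A. g i) = (\<Sum>i\<in>A. fps_to_fls (g i :: 'a::field_char_0 fps))"
  by (induction A rule: infinite_finite_induct) simp_all

lemma ftf_prod: "fps_to_fls (\<Prod>i\<in>A. g i) = (\<Prod>i\<in>A. fps_to_fls (g i :: 'a::field_char_0 fps))"
  by (induction A rule: infinite_finite_induct) (simp_all add: fls_times_fps_to_fls)

lemma mp_nth [simp]: "mp C $ n = fps_to_fls (C $ n)"
  by (simp add: mp_def)

lemma mp_mult: "mp (A * B) = mp A * mp B"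
  by (rule fps_ext) (simp add: mp_def fps_mult_nth ftf_sum fls_times_fps_to_fls)

lemma mp_one: "mp 1 = 1"
  by (rule fps_ext) (simp add: mp_def)

lemma mp_power: "mp (A ^ k) = mp A ^ k"
  by (induction k) (simp_all add: mp_one mp_mult)

lemma mp_compose: "mp (A oo B) = mp A oo mp B"
  by (rule fps_ext) (simp add: fps_compose_nth ftf_sum fls_times_fps_to_fls mp_power[symmetric])

lemma mp_X: "mp fps_X = fps_X"
  by (rule fps_ext) (simp add: mp_def fps_X_def)

lemma mp_inj: "mp A = mp B \<Longrightarrow> A = B"
  by (auto simp: mp_def fps_eq_iff)

lemma fls_const_prod: "fls_const (\<Prod>i\<in>A. g i) = (\<Prod>i\<in>A. fls_const (g i :: 'a::field_char_0))"
  by (induction A rule: infinite_finite_induct) (simp_all add: fls_const_mult_const[symmetric] del: fls_const_mult_const)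

lemma fls_const_fact: "fls_const (fact n) = (fact n :: 'a::field_char_0 fls)"
  by (metis fls_of_nat of_nat_fact)

lemma fls_const_coef:
  "fls_const ((-1) ^ p * fact q / (\<Prod>i\<in>A. fact (r i) * fact i ^ r i)) =
   ((-1) ^ p * fact q / (\<Prod>i\<in>A. fact (r i) * fact i ^ r i) :: 'a::field_char_0 fls)"
  by (simp only: fls_const_divide_const[symmetric] fls_const_mult_const[symmetric] fls_const_power
      fls_const_uminus fls_const_1 fls_const_prod fls_const_fact)

lemma A1_bridge:
  fixes X :: "nat \<Rightarrow> 'a::field_char_0 fps"
  assumes "X 1 $ 0 \<noteq> 0"
  shows "fps_to_fls (A1 n X) = A1f n (\<lambda>i. fps_to_fls (X i))"
proof -
  have sd: "subdegree (X 1) = 0" using assms by (rule subdegree_eq_0)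
  have e: "fps_to_fls (inverse (X (Suc 0))) = inverse (fps_to_fls (X (Suc 0)))"
    using fls_inverse_fps_to_fls[OF sd] by simp
  show ?thesis
    unfolding A1_def A1f_def
    by (simp add: fls_times_fps_to_fls fps_to_fls_power ftf_sum ftf_prod fls_const_coef
        e del: fls_const_mult_const)
qed

lemma core_R:
  fixes f :: "nat \<Rightarrow> nat \<Rightarrow> 'a::field_char_0"
  assumes f01: "f 0 1 \<noteq> 0"
  shows "Abs_fps (\<lambda>n. if n = 0 then 0 else phi f n * fps_const (1 / fact n)) oo
         Abs_fps (\<lambda>k. if k = 0 then 0 else fps_const (1 / fact k) * A1 k (\<lambda>i. phi f i)) = fps_X"
proof (rule mp_inj)
  define Xf where "Xf = (\<lambda>i. fps_to_fls (phi f i))"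
  have p10: "(\<lambda>i. phi f i) 1 $ 0 \<noteq> 0" using f01 by (simp add: phi_def)
  have X1: "Xf 1 \<noteq> 0" using p10 by (auto simp: Xf_def)
  have fc: "fls_const (1 / fact n) = (1 / fact n :: 'a fls)" for n
    by (simp add: fls_const_divide_const[symmetric] fls_const_fact)
  have G: "mp (Abs_fps (\<lambda>n. if n = 0 then 0 else phi f n * fps_const (1 / fact n))) =
       Abs_fps (\<lambda>n. if n = 0 then 0 else Xf n / fact n)"
    by (rule fps_ext) (simp add: Xf_def fls_times_fps_to_fls fc)
  have H: "mp (Abs_fps (\<lambda>k. if k = 0 then 0 else fps_const (1 / fact k) * A1 k (\<lambda>i. phi f i))) =
       Abs_fps (\<lambda>k. if k = 0 then 0 else A1f k Xf / fact k)"
    by (rule fps_ext) (simp add: Xf_def fls_times_fps_to_fls fc A1_bridge[of "\<lambda>i. phi f i", OF p10])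
  show "mp (Abs_fps (\<lambda>n. if n = 0 then 0 else phi f n * fps_const (1 / fact n)) oo
         Abs_fps (\<lambda>k. if k = 0 then 0 else fps_const (1 / fact k) * A1 k (\<lambda>i. phi f i))) = mp fps_X"
    unfolding mp_compose G H mp_X by (rule core_field[of Xf, OF X1])
qed

lemma ev_sums_shift:
  fixes s :: "'a::comm_ring_1 fps"
  assumes s0: "s $ 0 = 0" and F0: "F $ 0 = 0"
  shows "(\<lambda>j. F $ Suc j * s ^ Suc j) sums ev s F"
  unfolding sums_def
proof (rule tendsto_fpsI)
  fix n
  show "\<forall>\<^sub>F m in sequentially. (\<Sum>j<m. F $ Suc j * s ^ Suc j) $ n = ev s F $ n"
  proof (rule eventually_sequentiallyI[of n])
    fix m assume m: "n \<le> m"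
    have "(\<Sum>k<Suc m. F $ k * s ^ k) = F $ 0 * s ^ 0 + (\<Sum>j<m. F $ Suc j * s ^ Suc j)"
      by (rule sum.lessThan_Suc_shift)
    then have "(\<Sum>j<m. F $ Suc j * s ^ Suc j) = (\<Sum>k<Suc m. F $ k * s ^ k)"
      using F0 by simp
    also have "... = (\<Sum>k\<le>m. F $ k * s ^ k)" by (simp add: lessThan_Suc_atMost)
    finally show "(\<Sum>j<m. F $ Suc j * s ^ Suc j) $ n = ev s F $ n"
      using m by (simp add: ev_nth[OF s0])
  qed
qed

lemma coeff_sums:
  fixes P A :: "'a::comm_ring_1 fps"
  shows "(\<lambda>n. fps_const (P $ n) * A * fps_X ^ n) sums (P * A)"
  unfolding sums_def
proof (rule tendsto_fpsI)
  fix i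
  show "\<forall>\<^sub>F m in sequentially. (\<Sum>n<m. fps_const (P $ n) * A * fps_X ^ n) $ i = (P * A) $ i"
  proof (rule eventually_sequentiallyI[of "Suc i"])
    fix m assume m: "Suc i \<le> m"
    have "(\<Sum>n<m. fps_const (P $ n) * A * fps_X ^ n) $ i = (\<Sum>n<m. P $ n * (if i < n then 0 else A $ (i - n)))"
      by (simp add: fps_sum_nth mult.assoc fps_X_power_mult_right_nth)
    also have "... = (\<Sum>n=0..i. P $ n * A $ (i - n))"
      by (rule sum.mono_neutral_cong_right) (use m in auto)
    finally show "(\<Sum>n<m. fps_const (P $ n) * A * fps_X ^ n) $ i = (P * A) $ i"
      by (simp add: fps_mult_nth)
  qed
qed

lemma low_mult_zero:
  fixes D Q :: "'a::comm_ring_1 fps"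
  assumes D: "\<And>i. i < d \<Longrightarrow> D $ i = 0" and Q0: "Q $ 0 = 0" and m: "m \<le> d"
  shows "(D * Q) $ m = 0"
  unfolding fps_mult_nth
proof (rule sum.neutral, intro ballI)
  fix i assume "i \<in> {0..m}"
  then show "D $ i * Q $ (m - i) = 0"
    using D Q0 m by (cases "i < d") auto
qed

lemma low_mult_first:
  fixes D A :: "'a::comm_ring_1 fps"
  assumes D: "\<And>i. i < d \<Longrightarrow> D $ i = 0"
  shows "(A * D) $ d = A $ 0 * D $ d"
proof -
  have "(A * D) $ d = (\<Sum>i=0..d. if i = 0 then A $ 0 * D $ d else 0)"
    unfolding fps_mult_nth using D by (intro sum.cong refl) auto
  then show ?thesis by simp
qed

lemma powdiff_zero0:
  fixes y z :: "'a::comm_ring_1 fps"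
  assumes y0: "y $ 0 = 0" and z0: "z $ 0 = 0" and n: "n \<ge> 2"
  shows "(\<Sum>i<n. z ^ (n - Suc i) * y ^ i) $ 0 = 0"
proof -
  have "(z ^ (n - Suc i) * y ^ i) $ 0 = 0" if "i < n" for i
  proof -
    have "(z ^ (n - Suc i) * y ^ i) $ 0 = (z $ 0) ^ (n - Suc i) * (y $ 0) ^ i"
      by (simp add: fps_nth_power_0)
    also have "... = 0" using n that y0 z0 by (cases i) (auto simp: power_0_left)
    finally show ?thesis .
  qed
  then show ?thesis by (simp add: fps_sum_nth)
qed

lemma subst2_ev: "subst2 f y = ev y (Abs_fps (\<lambda>n. phi f n * fps_const (1 / fact n)))"
  by (rule fps_ext) (simp add: subst2_def ev_nth_def)

lemma uniq:
  fixes f :: "nat \<Rightarrow> nat \<Rightarrow> 'a::field_char_0"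
  assumes f01: "f 0 1 \<noteq> 0" and y0: "y $ 0 = 0" and z0: "z $ 0 = 0" and eq: "subst2 f y = subst2 f z"
  shows "y = z"
proof (rule ccontr)
  assume ne: "y \<noteq> z"
  define D where "D = y - z"
  define d where "d = subdegree D"
  define Phi where "Phi = Abs_fps (\<lambda>n. phi f n * fps_const (1 / fact n))"
  have Dne: "D \<noteq> 0" using ne unfolding D_def by (metis right_minus_eq)
  have Dlow: "\<And>i. i < d \<Longrightarrow> D $ i = 0" unfolding d_def by (rule nth_less_subdegree_zero)
  have Dd: "D $ d \<noteq> 0" unfolding d_def by (rule nth_subdegree_nonzero[OF Dne])
  have d1: "d \<ge> 1"
  proof (rule ccontr)
    assume "\<not> d \<ge> 1"
    then have "d = 0" by simp
    then show False using Dd y0 z0 by (simp add: D_def)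
  qed
  have T: "(Phi $ n * (y ^ n - z ^ n)) $ d = (if n = 1 then f 0 1 * D $ d else 0)" for n
  proof -
    consider "n = 0" | "n = 1" | "n \<ge> 2" by linarith
    then show ?thesis
    proof cases
      case 1 then show ?thesis by simp
    next
      case 2
      have "(Phi $ n * (y ^ n - z ^ n)) $ d = (phi f 1 * D) $ d" using 2 by (simp add: Phi_def D_def)
      also have "... = phi f 1 $ 0 * D $ d" by (rule low_mult_first[OF Dlow])
      finally show ?thesis using 2 by (simp add: phi_def)
    next
      case 3
      define Q where "Q = (\<Sum>i<n. z ^ (n - Suc i) * y ^ i)"
      have Q0: "Q $ 0 = 0" unfolding Q_def by (rule powdiff_zero0[OF y0 z0 3])
      have yz: "y ^ n - z ^ n = D * Q" unfolding D_def Q_def by (rule power_diff_sumr2)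
      have e: "Phi $ n * (y ^ n - z ^ n) = D * (Phi $ n * Q)"
        unfolding yz by (rule mult.left_commute)
      have "(D * (Phi $ n * Q)) $ d = 0"
        by (rule low_mult_zero[OF Dlow]) (use Q0 3 in auto)
      then show ?thesis using 3 unfolding e by simp
    qed
  qed
  have "0 = (subst2 f y - subst2 f z) $ d" using eq by simp
  also have "... = (\<Sum>n\<le>d. (Phi $ n * y ^ n) $ d) - (\<Sum>n\<le>d. (Phi $ n * z ^ n) $ d)"
    by (simp add: subst2_def Phi_def)
  also have "... = (\<Sum>n\<le>d. (Phi $ n * y ^ n) $ d - (Phi $ n * z ^ n) $ d)"
    by (rule sum_subtractf[symmetric])
  also have "... = (\<Sum>n\<le>d. (Phi $ n * (y ^ n - z ^ n)) $ d)"
    by (simp only: right_diff_distrib fps_sub_nth)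
  also have "... = (\<Sum>n\<le>d. if n = 1 then f 0 1 * D $ d else 0)" using T by simp
  also have "... = f 0 1 * D $ d" using d1 by simp
  finally show False using f01 Dd by simp
qed

theorem mainTheorem2:
  fixes f :: "nat \<Rightarrow> nat \<Rightarrow> 'a::field_char_0"
  assumes "f 0 0 = 0" and "f 0 1 \<noteq> 0"
  shows "(\<exists>!y. fps_nth y 0 = 0 \<and> subst2 f y = 0) \<and>
         (\<forall>y. fps_nth y 0 = 0 \<and> subst2 f y = 0 \<longrightarrow>
            (\<lambda>j. let k = j + 1 in
                 fps_const ((-1) ^ k / fact k) * A1 k (\<lambda>i. phi f i) * phi f 0 ^ k) sums y
          \<and> (\<forall>k\<ge>1. summable (\<lambda>n. if k \<le> n then
                 fps_const ((-1) ^ k * bellB n k (\<lambda>i. f i 0) / fact n) *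
                 A1 k (\<lambda>i. phi f i) * fps_X ^ n else 0))
          \<and> (\<lambda>j. let k = j + 1 in
                 (\<Sum>n. if k \<le> n then
                    fps_const ((-1) ^ k * bellB n k (\<lambda>i. f i 0) / fact n) *
                    A1 k (\<lambda>i. phi f i) * fps_X ^ n else 0)) sums y)"
proof -
  define Phi where "Phi = Abs_fps (\<lambda>n. phi f n * fps_const (1 / fact n))"
  define GR where "GR = Abs_fps (\<lambda>n. if n = 0 then 0 else phi f n * fps_const (1 / fact n))"
  define HR where "HR = Abs_fps (\<lambda>k. if k = 0 then 0 else fps_const (1 / fact k) * A1 k (\<lambda>i. phi f i))"
  define s where "s = - phi f 0"
  define Y where "Y = ev s HR"
  have s0: "s $ 0 = 0" using assms(1) by (simp add: s_def phi_def)
  have HR0: "HR $ 0 = 0" by (simp add: HR_def)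
  have GR0: "GR $ 0 = 0" by (simp add: GR_def)
  have Phi_split: "Phi = fps_const (phi f 0) + GR"
    by (rule fps_ext) (simp add: Phi_def GR_def)
  have core: "GR oo HR = fps_X" unfolding GR_def HR_def by (rule core_R[of f, OF assms(2)])
  have Y0: "Y $ 0 = 0" unfolding Y_def by (rule ev_0[OF HR0])
  have solY: "subst2 f Y = 0"
  proof -
    have "subst2 f Y = ev Y Phi" by (simp add: subst2_ev Phi_def)
    also have "... = phi f 0 + ev Y GR" by (simp add: Phi_split ev_add ev_const)
    also have "ev Y GR = ev s (GR oo HR)" unfolding Y_def by (rule ev_compose[OF s0 HR0, symmetric])
    also have "... = s" unfolding core by (rule ev_X[OF s0])
    finally show ?thesis by (simp add: s_def)
  qed
  have uniqY: "y = Y" if "y $ 0 = 0" "subst2 f y = 0" for y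
    by (rule uniq[where f=f and y=y and z=Y, OF assms(2) that(1) Y0]) (simp add: that(2) solY)
  define T where "T k = fps_const ((-1) ^ k / fact k) * A1 k (\<lambda>i. phi f i) * phi f 0 ^ k" for k
  have sumA: "(\<lambda>j. T (j + 1)) sums Y"
  proof -
    have "T (j + 1) = HR $ Suc j * s ^ Suc j" for j
    proof -
      have c: "fps_const ((-1) ^ k / fact k :: 'a) = (-1) ^ k * fps_const (1 / fact k)" for k
      proof -
        have "fps_const ((-1) ^ k / fact k :: 'a) = fps_const ((-1) ^ k) * fps_const (1 / fact k)"
          unfolding fps_const_mult by simp
        also have "fps_const ((-1) ^ k :: 'a) = (-1) ^ k"
          by (simp only: fps_const_power[symmetric] fps_const_neg[symmetric] fps_const_1_eq_1)
        finally show ?thesis .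
      qed
      have h: "HR $ Suc j = fps_const (1 / fact (Suc j)) * A1 (Suc j) (\<lambda>i. phi f i)"
        by (simp add: HR_def)
      have sp: "s ^ Suc j = (-1) ^ Suc j * phi f 0 ^ Suc j" unfolding s_def by (rule power_minus)
      have "T (Suc j) = HR $ Suc j * s ^ Suc j"
        unfolding T_def h sp c by (simp only: mult_ac)
      then show ?thesis by simp
    qed
    then show ?thesis unfolding Y_def using ev_sums_shift[OF s0 HR0] by simp
  qed
  define P where "P k = fps_const ((-1) ^ k / fact k) * phi f 0 ^ k" for k
  have termB: "(\<lambda>n. if k \<le> n then fps_const ((-1) ^ k * bellB n k (\<lambda>i. f i 0) / fact n) *
                 A1 k (\<lambda>i. phi f i) * fps_X ^ n else 0) =
       (\<lambda>n. fps_const (P k $ n) * A1 k (\<lambda>i. phi f i) * fps_X ^ n)" for k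
  proof
    fix n
    have ph: "Abs_fps (\<lambda>i. if i = 0 then 0 else f i 0 / fact i) = phi f 0"
      by (rule fps_ext) (simp add: phi_def assms(1))
    have p00: "phi f 0 $ 0 = 0" using assms(1) by (simp add: phi_def)
    have Pn: "P k $ n = (if k \<le> n then (-1) ^ k * bellB n k (\<lambda>i. f i 0) / fact n else 0)"
    proof (cases "k \<le> n")
      case True
      have B: "bellB n k (\<lambda>i. f i 0) = fact n * ((fps_const (1 / fact k) * phi f 0 ^ k) $ n)"
        unfolding bellB_def ph ..
      show ?thesis using True unfolding B P_def fps_mult_left_const_nth by simp
    next
      case False
      then show ?thesis using startsby_zero_power_prefix[OF p00, of k] by (simp add: P_def)
    qed
    show "(if k \<le> n then fps_const ((-1) ^ k * bellB n k (\<lambda>i. f i 0) / fact n) *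
                 A1 k (\<lambda>i. phi f i) * fps_X ^ n else 0) =
       fps_const (P k $ n) * A1 k (\<lambda>i. phi f i) * fps_X ^ n"
      unfolding Pn by simp
  qed
  have sB: "(\<lambda>n. if k \<le> n then fps_const ((-1) ^ k * bellB n k (\<lambda>i. f i 0) / fact n) *
                 A1 k (\<lambda>i. phi f i) * fps_X ^ n else 0) sums T k" for k
  proof -
    have "P k * A1 k (\<lambda>i. phi f i) = T k" by (simp add: P_def T_def mult_ac)
    then show ?thesis unfolding termB using coeff_sums[of "P k" "A1 k (\<lambda>i. phi f i)"] by simp
  qed
  have main: "(\<lambda>j. let k = j + 1 in
                 fps_const ((-1) ^ k / fact k) * A1 k (\<lambda>i. phi f i) * phi f 0 ^ k) sums y
          \<and> (\<forall>k\<ge>1. summable (\<lambda>n. if k \<le> n then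
                 fps_const ((-1) ^ k * bellB n k (\<lambda>i. f i 0) / fact n) *
                 A1 k (\<lambda>i. phi f i) * fps_X ^ n else 0))
          \<and> (\<lambda>j. let k = j + 1 in
                 (\<Sum>n. if k \<le> n then
                    fps_const ((-1) ^ k * bellB n k (\<lambda>i. f i 0) / fact n) *
                    A1 k (\<lambda>i. phi f i) * fps_X ^ n else 0)) sums y"
    if "y = Y" for y
  proof (intro conjI allI impI)
    show "(\<lambda>j. let k = j + 1 in
                 fps_const ((-1) ^ k / fact k) * A1 k (\<lambda>i. phi f i) * phi f 0 ^ k) sums y"
      using sumA that by (simp add: T_def Let_def)
    fix k :: nat
    show "summable (\<lambda>n. if k \<le> n then
                 fps_const ((-1) ^ k * bellB n k (\<lambda>i. f i 0) / fact n) *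
                 A1 k (\<lambda>i. phi f i) * fps_X ^ n else 0)"
      using sB[of k] by (rule sums_summable)
  next
    have "(\<lambda>j. let k = j + 1 in
                 (\<Sum>n. if k \<le> n then
                    fps_const ((-1) ^ k * bellB n k (\<lambda>i. f i 0) / fact n) *
                    A1 k (\<lambda>i. phi f i) * fps_X ^ n else 0)) = (\<lambda>j. T (j + 1))"
      by (rule ext) (simp add: Let_def sums_unique[OF sB, symmetric])
    then show "(\<lambda>j. let k = j + 1 in
                 (\<Sum>n. if k \<le> n then
                    fps_const ((-1) ^ k * bellB n k (\<lambda>i. f i 0) / fact n) *
                    A1 k (\<lambda>i. phi f i) * fps_X ^ n else 0)) sums y"
      using sumA that by simp
  qed
  have E: "\<exists>!y. y $ 0 = 0 \<and> subst2 f y = 0"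
    using Y0 solY uniqY by blast
  show ?thesis
    apply (rule conjI[OF E])
    apply (intro allI impI)
    apply (rule main)
    using uniqY by blast
qed

end
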